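(* Let $m\in\mathbb N$. For all $\varepsilon_1,\dots,\varepsilon_m\in\{\pm1\}$ and $i_1,\dots,i_m\in\mathbb N$, $$\varepsilon_1\eta^{i_1}+\dots+\varepsilon_m\eta^{i_m}=0\quad\text{implies}\quad \varepsilon_1a_{i_1}+\dots+\varepsilon_ma_{i_m}=0.$$
   Context: Standing setting: $d\in\mathbb N$; $\lambda_1,\dots,\lambda_d\in\mathbb C$ are the roots of an irreducible polynomial of degree $d$ with integer coefficients; $c_1,\dots,c_d\in\mathbb C$; the dominant root condition holds: $\lambda_1$ is real, $\lambda_1>1$, $\lambda_1>\max\{|\lambda_2|,\dots,|\lambda_d|\}$, $c_1\ne0$; $a_n=c_1\lambda_1^n+\dots+c_d\lambda_d^n$ is a positive integer for every $n\in\mathbb N$; and $\eta:=\lambda_1$. *)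

theory Defs
  imports Complex_Main "HOL-Computational_Algebra.Computational_Algebra"
begin

definition lrs_seq :: "nat \<Rightarrow> (nat \<Rightarrow> complex) \<Rightarrow> (nat \<Rightarrow> complex) \<Rightarrow> nat \<Rightarrow> complex" where
  "lrs_seq d c lam n = (\<Sum>k=1..d. c k * lam k ^ n)"

end

theory Submission
  imports Defs
begin
lemma mp_add: "map_poly (of_int :: int \<Rightarrow> 'a::comm_ring_1) (p+q) = map_poly of_int p + map_poly of_int q"
  by (rule poly_eqI) (simp add: coeff_map_poly)
lemma mp_smult: "map_poly (of_int :: int \<Rightarrow> 'a::comm_ring_1) (smult c p) = smult (of_int c) (map_poly of_int p)"
  by (rule poly_eqI) (simp add: coeff_map_poly)
lemma mp_mult: "map_poly (of_int :: int \<Rightarrow> 'a::comm_ring_1) (p*q) = map_poly of_int p * map_poly of_int q"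
  by (induction p) (auto simp: map_poly_pCons mp_add mp_smult)
lemma ev_mult: "poly (map_poly (of_int :: int \<Rightarrow> 'a::comm_ring_1) (p*q)) y = poly (map_poly of_int p) y * poly (map_poly of_int q) y"
  by (simp add: mp_mult)
lemma ev_add: "poly (map_poly (of_int :: int \<Rightarrow> 'a::comm_ring_1) (p+q)) y = poly (map_poly of_int p) y + poly (map_poly of_int q) y"
  by (simp add: mp_add)
lemma ev_smult: "poly (map_poly (of_int :: int \<Rightarrow> 'a::comm_ring_1) (smult c p)) y = of_int c * poly (map_poly of_int p) y"
  by (simp add: mp_smult)
lemma ev_sum: "poly (map_poly (of_int :: int \<Rightarrow> 'a::comm_ring_1) (\<Sum>j\<in>A. monom (e j) (n j))) y = (\<Sum>j\<in>A. of_int (e j) * y ^ n j)"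
proof -
  have "map_poly (of_int :: int \<Rightarrow> 'a) (\<Sum>j\<in>A. monom (e j) (n j)) = (\<Sum>j\<in>A. monom (of_int (e j)) (n j))"
    by (rule poly_eqI) (simp add: coeff_map_poly coeff_sum coeff_monom of_int_sum if_distrib cong: if_cong)
  then show ?thesis by (simp add: poly_sum poly_monom)
qed

lemma min_poly_div:
  fixes P Q :: "int poly" and x :: complex
  assumes P_irr: "irreducible P" and Px: "poly (map_poly of_int P) x = 0"
    and Qx: "poly (map_poly of_int Q) x = 0"
  shows "\<exists>c D. c \<noteq> 0 \<and> smult c Q = P * D"
proof -
  define E where "E R = poly (map_poly (of_int :: int \<Rightarrow> complex) R) x" for R
  have P0: "P \<noteq> 0" using P_irr by auto
  have prime: "prime_elem P" using P_irr by (rule irreducible_imp_prime_poly)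
  obtain R where R: "R \<noteq> 0 \<and> E R = 0" and Rmin: "\<forall>S. S \<noteq> 0 \<and> E S = 0 \<longrightarrow> degree R \<le> degree S"
    using ex_has_least_nat[of "\<lambda>R. R \<noteq> 0 \<and> E R = 0" P degree] P0 Px unfolding E_def by blast
  obtain D R1 where dm: "pseudo_divmod P R = (D, R1)" by (metis surj_pair)
  define c where "c = coeff R (degree R) ^ (Suc (degree P) - degree R)"
  have c0: "c \<noteq> 0" using R by (simp add: c_def)
  have eq1: "smult c P = R * D + R1" and r1: "R1 = 0 \<or> degree R1 < degree R"
    using pseudo_divmod[OF _ dm] R unfolding c_def by auto
  have "E R1 = E (smult c P) - E (R * D)" by (simp add: eq1 E_def ev_add)
  also have "\<dots> = 0" using Px R by (simp add: E_def ev_smult ev_mult)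
  finally have "E R1 = 0" .
  with r1 Rmin have R10: "R1 = 0" by (metis leD)
  have degPR: "degree P \<le> degree R"
  proof -
    have RD: "R * D = smult c P" using eq1 R10 by simp
    have "P dvd smult c P" by (rule dvd_smult) simp
    hence "P dvd R * D" by (simp only: RD)
    hence "P dvd R \<or> P dvd D" using prime by (simp add: prime_elem_dvd_mult_iff)
    thus ?thesis
    proof
      assume "P dvd R" thus ?thesis using R by (simp add: dvd_imp_degree_le)
    next
      assume "P dvd D"
      then obtain G where G: "D = P * G" by (auto simp: dvd_def)
      have "P * (R * G) = P * [:c:]" using eq1 R10 G by (simp add: algebra_simps)
      hence "R * G = [:c:]" using P0 by (metis mult_left_cancel)
      hence RG: "R * G = [:c:]" .
      hence G0: "G \<noteq> 0" using c0 by auto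
      have "degree R + degree G = 0" using degree_mult_eq[of R G] R G0 RG by simp
      hence "degree R = 0" by simp
      then obtain r where "R = [:r:]" by (metis degree_eq_zeroE)
      thus ?thesis using R by (simp add: E_def map_poly_pCons)
    qed
  qed
  obtain D2 R2 where dm2: "pseudo_divmod Q P = (D2, R2)" by (metis surj_pair)
  define c2 where "c2 = coeff P (degree P) ^ (Suc (degree Q) - degree P)"
  have c20: "c2 \<noteq> 0" using P0 by (simp add: c2_def)
  have eq2: "smult c2 Q = P * D2 + R2" and r2: "R2 = 0 \<or> degree R2 < degree P"
    using pseudo_divmod[OF P0 dm2] unfolding c2_def by auto
  have "E R2 = E (smult c2 Q) - E (P * D2)" by (simp add: eq2 E_def ev_add)
  also have "\<dots> = 0" using Px Qx by (simp add: E_def ev_smult ev_mult)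
  finally have "E R2 = 0" .
  with r2 Rmin degPR have "R2 = 0" by (metis leD order_less_le_trans)
  thus ?thesis using eq2 c20 by auto
qed

theorem lemma6p2:
  fixes d m :: nat and lam c :: "nat \<Rightarrow> complex" and P :: "int poly"
    and eps :: "nat \<Rightarrow> int" and i :: "nat \<Rightarrow> nat"
  assumes d_pos: "d \<ge> 1"
    and P_irr: "irreducible P"
    and P_deg: "degree P = d"
    and P_roots: "map_poly of_int P = smult (of_int (lead_coeff P)) (\<Prod>k=1..d. [:- lam k, 1:])"
    and lam1_real: "lam 1 \<in> \<real>"
    and lam1_gt1: "Re (lam 1) > 1"
    and lam1_dom: "\<forall>k\<in>{2..d}. cmod (lam k) < Re (lam 1)"
    and c1_nz: "c 1 \<noteq> 0"
    and a_posint: "\<forall>n\<ge>1. \<exists>z::int. z > 0 \<and> lrs_seq d c lam n = of_int z"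
    and eps_pm: "\<forall>j\<in>{1..m}. eps j = 1 \<or> eps j = -1"
  shows "(\<Sum>j=1..m. of_int (eps j) * Re (lam 1) ^ i j) = (0::real) \<longrightarrow>
         (\<Sum>j=1..m. of_int (eps j) * lrs_seq d c lam (i j)) = 0"
proof
  assume hyp: "(\<Sum>j=1..m. of_int (eps j) * Re (lam 1) ^ i j) = (0::real)"
  define Q :: "int poly" where "Q = (\<Sum>j=1..m. monom (eps j) (i j))"
  have evQ: "poly (map_poly of_int Q) y = (\<Sum>j=1..m. of_int (eps j) * y ^ i j)" for y :: complex
    unfolding Q_def by (rule ev_sum)
  have roots: "poly (map_poly of_int P) (lam k) = (0::complex)" if "k \<in> {1..d}" for k
  proof -
    have "poly (\<Prod>k=1..d. [:- lam k, 1:]) (lam k) = (\<Prod>k'=1..d. poly [:- lam k', 1:] (lam k))"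
      by (simp add: poly_prod)
    also have "\<dots> = 0" using that by (intro prod_zero) auto
    finally show ?thesis by (subst P_roots) simp
  qed
  have l1: "lam 1 = of_real (Re (lam 1))" using lam1_real by (simp add: complex_is_Real_iff complex_eq_iff)
  have "poly (map_poly of_int Q) (lam 1) = of_real (\<Sum>j=1..m. of_int (eps j) * Re (lam 1) ^ i j)"
    by (subst evQ, subst l1) simp
  hence Q1: "poly (map_poly of_int Q) (lam 1) = 0" using hyp by (metis of_real_0)
  obtain e D where e: "e \<noteq> 0" and eD: "smult e Q = P * D"
    using min_poly_div[OF P_irr roots[of 1] Q1] d_pos by auto
  have Qk: "poly (map_poly of_int Q) (lam k) = 0" if "k \<in> {1..d}" for k
  proof -
    have "of_int e * poly (map_poly of_int Q) (lam k) = poly (map_poly of_int (P * D)) (lam k)"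
      by (simp add: eD[symmetric] ev_smult)
    also have "\<dots> = 0" by (simp add: ev_mult roots[OF that])
    finally show ?thesis using e by simp
  qed
  have "(\<Sum>j=1..m. of_int (eps j) * lrs_seq d c lam (i j))
      = (\<Sum>k=1..d. c k * (\<Sum>j=1..m. of_int (eps j) * lam k ^ i j))"
    unfolding lrs_seq_def
  proof -
    have "(\<Sum>j=1..m. of_int (eps j) * (\<Sum>k=1..d. c k * lam k ^ i j))
       = (\<Sum>j=1..m. \<Sum>k=1..d. of_int (eps j) * (c k * lam k ^ i j))"
      by (simp add: sum_distrib_left)
    also have "\<dots> = (\<Sum>k=1..d. \<Sum>j=1..m. of_int (eps j) * (c k * lam k ^ i j))"
      by (rule sum.swap)
    also have "\<dots> = (\<Sum>k=1..d. c k * (\<Sum>j=1..m. of_int (eps j) * lam k ^ i j))"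
      by (simp add: sum_distrib_left mult_ac)
    finally show "(\<Sum>j=1..m. of_int (eps j) * (\<Sum>k=1..d. c k * lam k ^ i j))
      = (\<Sum>k=1..d. c k * (\<Sum>j=1..m. of_int (eps j) * lam k ^ i j))" .
  qed
  also have "\<dots> = 0" using Qk by (simp add: evQ)
  finally show "(\<Sum>j=1..m. of_int (eps j) * lrs_seq d c lam (i j)) = 0" .
qed

end
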